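(* Let $s:\mathbb C_+\to\mathbb C_+$ be continuous and set $R(z)=s(z)^2+s(z)z+1$. For $E\in\mathbb R$, $\eta_0>0$ and $\eta_1\ge3\vee\eta_0$, suppose that there is a nonincreasing continuous function $r:[\eta_0,\eta_1]\to[0,1]$ such that $|R(E+\mathrm i\eta)|\le(1+|E+\mathrm i\eta|)\,r(\eta)$ for all $\eta\in[\eta_0,\eta_1]$. Then for all $z=E+\mathrm i\eta$ with $\eta\in[\eta_0,\eta_1]$ we have \[|s(z)-m(z)|=O\big(F_z(r(\eta))\big).\]
   Context: $\mathbb C_+$ is the open upper half-plane. $m(z)=\frac{-z+\sqrt{z^2-4}}2$ with the branch chosen so that $m(z)\in\mathbb C_+$ for $z\in\mathbb C_+$ (equivalently, branch cut $[-2,2]$ and $\sqrt{z^2-4}\sim z$ as $|z|\to\infty$). For $r\in[0,1]$, $F_z(r)=[(1+|z^2-4|^{-1/2})r]\wedge\sqrt r$. $O(\cdot)$ denotes a bound with an absolute constant. *)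

theory Defs
  imports "HOL-Analysis.Analysis"
begin

text \<open>Stieltjes transform of the semicircle law:
  m(z) = (-z + sqrt(z^2-4))/2, with sqrt(z^2-4) taken with branch cut [-2,2] and
  sqrt(z^2-4) ~ z at infinity; realised as csqrt(z-2) * csqrt(z+2) with principal roots.\<close>
definition msc :: "complex \<Rightarrow> complex" where
  "msc z = (- z + csqrt (z - 2) * csqrt (z + 2)) / 2"

definition Fz :: "complex \<Rightarrow> real \<Rightarrow> real" where
  "Fz z r = min ((1 + 1 / sqrt (cmod (z\<^sup>2 - 4))) * r) (sqrt r)"

end

theory Submission
  imports Defs
begin


lemma good_real:
  fixes A B Wn t \<rho> :: real
  assumes "0 \<le> A" "A \<le> B" "0 < Wn" "Wn \<le> A + B" "A * B \<le> (1+t)*\<rho>"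
    "t\<^sup>2 - 4 \<le> Wn\<^sup>2" "0 \<le> t" "0 \<le> \<rho>" "\<rho> \<le> 1"
  shows "A \<le> 12 * min ((1 + 1/Wn)*\<rho>) (sqrt \<rho>)"
proof -
  have B0: "Wn \<le> 2*B" using assms by linarith
  have t3: "1 + t \<le> 3*(1+Wn)"
  proof (cases "t \<le> 2")
    case True then show ?thesis using assms(3) by (simp add: algebra_simps)
  next
    case False
    have "(t-2)\<^sup>2 \<le> Wn\<^sup>2" using assms False by (simp add: power2_eq_square algebra_simps)
    then have "t - 2 \<le> Wn" using assms False by (meson abs_le_square_iff power2_le_imp_le less_imp_le)
    then show ?thesis using assms(3) by (simp add: algebra_simps)
  qed
  have "A * Wn \<le> 2 * (A*B)" using B0 assms by (metis mult.assoc mult.left_commute mult_left_mono)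
  also have "\<dots> \<le> 2*(1+t)*\<rho>" using assms by linarith
  also have "\<dots> \<le> 6*(1+Wn)*\<rho>" using t3 assms by (simp add: mult_right_mono)
  finally have "A * Wn \<le> 6*(1+Wn)*\<rho>" .
  then have h1: "A \<le> 6*(1+1/Wn)*\<rho>" using assms by (simp add: field_simps)
  have "A * A \<le> A * B" using assms by (intro mult_left_mono) auto
  then have A2: "A\<^sup>2 \<le> (1+t)*\<rho>" using assms by (simp add: power2_eq_square)
  have h2: "A \<le> 12 * sqrt \<rho>"
  proof (cases "1 \<le> Wn")
    case True
    then have "6*(1+1/Wn) \<le> 12" using assms by (simp add: field_simps)
    then have "6*(1+1/Wn)*\<rho> \<le> 12*\<rho>" using assms by (intro mult_right_mono) auto
    then have "A \<le> 12*\<rho>" using h1 by linarith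
    moreover have "\<rho>\<^sup>2 \<le> \<rho>" using assms by (simp add: power2_eq_square mult_left_le_one_le)
    then have "\<rho> \<le> sqrt \<rho>" by (rule real_le_rsqrt)
    ultimately show ?thesis by linarith
  next
    case False
    then have "Wn\<^sup>2 \<le> 1" using assms by (simp add: power_le_one)
    then have "t\<^sup>2 \<le> 3\<^sup>2" using assms by simp
    then have "t \<le> 3" by (rule power2_le_imp_le) simp
    then have "(1+t)*\<rho> \<le> 4*\<rho>" using assms by (intro mult_right_mono) auto
    then have "A\<^sup>2 \<le> 144*\<rho>" using A2 assms by linarith
    then have "A \<le> sqrt (144*\<rho>)" by (simp add: real_le_rsqrt)
    then show ?thesis by (simp add: real_sqrt_mult)
  qed
  have X0: "0 \<le> (1 + 1/Wn)*\<rho>" using assms by simp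
  have "A \<le> 12 * ((1 + 1/Wn)*\<rho>)" using h1 X0 by linarith
  then have "A \<le> min (12 * ((1 + 1/Wn)*\<rho>)) (12 * sqrt \<rho>)" using h2 by linarith
  then show ?thesis by (simp add: min_mult_distrib_left)
qed



lemma bad_real:
  fixes A B Wn t \<rho> As Ws ts \<rho>s :: real
  assumes "0 \<le> A" "0 \<le> B" "0 < Wn" "A \<le> B + Wn" "A * B \<le> (1+t)*\<rho>" "B \<le> A"
    "0 \<le> t" "t \<le> ts" "Wn \<le> Ws" "0 \<le> As" "As\<^sup>2 \<le> (1+ts)*\<rho>s" "Ws \<le> 2*As"
    "ts\<^sup>2 - 4 \<le> Ws\<^sup>2" "0 \<le> \<rho>s" "\<rho>s \<le> \<rho>" "\<rho> \<le> 1"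
  shows "A \<le> 54 * min ((1 + 1/Wn)*\<rho>) (sqrt \<rho>)"
proof -
  have Ws0: "0 \<le> Ws" using assms by linarith
  have "Ws\<^sup>2 \<le> (2*As)\<^sup>2" using Ws0 assms by (intro power_mono) auto
  also have "\<dots> = 4 * As\<^sup>2" by (simp add: power2_eq_square)
  finally have W1: "Ws\<^sup>2 \<le> 4*(1+ts)*\<rho>s" using assms by linarith
  have "(1+ts)*\<rho>s \<le> (1+ts)*1" using assms by (intro mult_left_mono) auto
  then have "ts\<^sup>2 - 4 \<le> 4*(1+ts)" using W1 assms by linarith
  then have ts6: "ts \<le> 6"
  proof -
    assume h: "ts\<^sup>2 - 4 \<le> 4*(1+ts)"
    show "ts \<le> 6"
    proof (rule ccontr)
      assume n6: "\<not> ts \<le> 6"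
      then have "6*ts < ts*ts" by (simp add: mult_strict_right_mono)
      moreover have "ts*ts \<le> 8 + 4*ts" using h by (simp add: power2_eq_square algebra_simps)
      ultimately show False using n6 by linarith
    qed
  qed
  have "(1+ts)*\<rho>s \<le> 7*\<rho>s" using assms ts6 by (intro mult_right_mono) auto
  also have "\<dots> \<le> 7*\<rho>" using assms by simp
  finally have "(1+ts)*\<rho>s \<le> 7*\<rho>" .
  then have "Ws\<^sup>2 \<le> 28*\<rho>" using W1 by linarith
  moreover have "Wn\<^sup>2 \<le> Ws\<^sup>2" using assms by (intro power_mono) auto
  ultimately have Wn2: "Wn\<^sup>2 \<le> 28*\<rho>" by linarith
  have "B\<^sup>2 \<le> A * B" using assms by (simp add: power2_eq_square mult_right_mono)
  also have "\<dots> \<le> (1+t)*\<rho>" by fact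
  also have "\<dots> \<le> 7*\<rho>" using assms ts6 by (intro mult_right_mono) auto
  finally have B2: "B\<^sup>2 \<le> 7*\<rho>" .
  have "A\<^sup>2 \<le> (B+Wn)\<^sup>2" using assms by (intro power_mono) auto
  also have "\<dots> \<le> 2*B\<^sup>2 + 2*Wn\<^sup>2" using sum_squares_ge_zero[of "B-Wn" 0] by (simp add: power2_eq_square algebra_simps)
  finally have "A\<^sup>2 \<le> 81*\<rho>" using B2 Wn2 assms by linarith
  then have "A \<le> sqrt (81*\<rho>)" by (rule real_le_rsqrt)
  then have A9: "A \<le> 9 * sqrt \<rho>" by (simp add: real_sqrt_mult)
  have "Wn \<le> sqrt (36*\<rho>)" using Wn2 assms by (intro real_le_rsqrt) linarith
  then have W6: "Wn \<le> 6 * sqrt \<rho>" by (simp add: real_sqrt_mult)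
  have rpos: "0 < \<rho>"
  proof (rule ccontr)
    assume "\<not> 0 < \<rho>"
    then have "\<rho> = 0" using assms by linarith
    then show False using W6 assms by simp
  qed
  have "Wn * sqrt \<rho> \<le> 6 * sqrt \<rho> * sqrt \<rho>" using W6 rpos by (intro mult_right_mono) auto
  also have "\<dots> = 6 * \<rho>" using rpos by simp
  finally have "sqrt \<rho> \<le> 6 * \<rho> / Wn" using assms by (simp add: field_simps)
  also have "\<dots> \<le> 6 * ((1 + 1/Wn)*\<rho>)" using assms rpos by (simp add: field_simps)
  finally have "9 * sqrt \<rho> \<le> 54 * ((1 + 1/Wn)*\<rho>)" by linarith
  moreover have "9 * sqrt \<rho> \<le> 54 * sqrt \<rho>" using rpos by simp
  ultimately have "A \<le> min (54 * ((1 + 1/Wn)*\<rho>)) (54 * sqrt \<rho>)" using A9 by linarith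
  then show ?thesis by (simp add: min_mult_distrib_left)
qed

lemma top_real:
  fixes A B Wn T \<eta> :: real
  assumes "B < A" "\<eta> < B" "3 \<le> \<eta>" "A * B \<le> 1 + T" "Wn \<le> A + B" "T\<^sup>2 - 4 \<le> Wn\<^sup>2" "0 \<le> T"
    "0 \<le> Wn"
  shows False
proof -
  have B0: "0 < B" using assms by linarith
  have "B\<^sup>2 < A*B" using assms B0 by (simp add: power2_eq_square)
  moreover have "3\<^sup>2 \<le> B\<^sup>2" using assms by (intro power_mono) auto
  then have "9 \<le> B\<^sup>2" by simp
  ultimately have T8: "8 < T" using assms by linarith
  have "Wn < 2*A" using assms by linarith
  then have "B * Wn < B * (2*A)" using B0 by (rule mult_strict_left_mono)
  moreover have "B * (2*A) = 2*(A*B)" by simp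
  ultimately have "B * Wn < 2 + 2*T" using assms by linarith
  moreover have "3 * Wn \<le> B * Wn" using assms by (intro mult_right_mono) auto
  ultimately have "3 * Wn < 2 * (1 + T)" by simp
  then have "(3*Wn)\<^sup>2 < (2*(1+T))\<^sup>2" using assms by (intro power_strict_mono) auto
  then have "9 * (Wn*Wn) < 4 + 8*T + 4*(T*T)" by (simp add: power2_eq_square algebra_simps)
  moreover have "T*T - 4 \<le> Wn*Wn" using assms(6) by (simp add: power2_eq_square)
  ultimately have "5*(T*T) < 40 + 8 * T" by linarith
  moreover have "8 * T \<le> T*T" using T8 by (simp add: mult_right_mono)
  ultimately show False using T8 by linarith
qed


lemma csqrt_upper:
  assumes "0 < Im x"
  shows "0 < Re (csqrt x)" "0 < Im (csqrt x)"
proof -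
  have "Im (csqrt x) \<noteq> 0" using assms Im_csqrt_eq_0_iff[of x]
    by (auto simp: complex_nonneg_Reals_iff)
  moreover have "Im (csqrt x) \<ge> 0" using assms complex_Re_le_cmod[of x] by simp
  ultimately show "0 < Im (csqrt x)" by linarith
  have "Re (csqrt x) \<noteq> 0"
  proof
    assume h: "Re (csqrt x) = 0"
    have "x = (csqrt x)\<^sup>2" by simp
    then have "Im x = 2 * Re (csqrt x) * Im (csqrt x)" by (metis Im_power2)
    then show False using h assms by simp
  qed
  then show "0 < Re (csqrt x)" using Re_csqrt[of x] by linarith
qed

lemma W_sq: "(csqrt (z - 2) * csqrt (z + 2))\<^sup>2 = z\<^sup>2 - 4"
  unfolding power_mult_distrib power2_csqrt by (simp add: power2_eq_square algebra_simps)

lemma W_Im: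
  assumes "0 < Im z"
  shows "Im z < Im (csqrt (z - 2) * csqrt (z + 2))"
proof -
  define w where "w = csqrt (z - 2) * csqrt (z + 2)"
  have p: "0 < Re (csqrt (z-2))" "0 < Im (csqrt (z-2))" "0 < Re (csqrt (z+2))" "0 < Im (csqrt (z+2))"
    using csqrt_upper[of "z-2"] csqrt_upper[of "z+2"] assms by auto
  have y0: "0 < Im w" unfolding w_def using p by (simp add: add_pos_pos)
  have sq: "w\<^sup>2 = z\<^sup>2 - 4" unfolding w_def by (rule W_sq)
  have re: "Re w * Re w - Im w * Im w = Re z * Re z - Im z * Im z - 4"
    using arg_cong[OF sq, of Re] by (simp add: power2_eq_square)
  have im: "Re w * Im w = Re z * Im z"
    using arg_cong[OF sq, of Im] by (simp add: power2_eq_square mult.commute)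
  have "Im z < Im w"
  proof (rule ccontr)
    assume "\<not> Im z < Im w"
    then have le: "Im w \<le> Im z" by simp
    have "(Re w * Im w)\<^sup>2 = (Re z * Im z)\<^sup>2" using im by simp
    then have "(Re w)\<^sup>2 * (Im w)\<^sup>2 = (Re z)\<^sup>2 * (Im z)\<^sup>2" by (simp add: power_mult_distrib)
    moreover have "(Im w)\<^sup>2 \<le> (Im z)\<^sup>2" using le y0 by (intro power_mono) auto
    ultimately have "(Re w)\<^sup>2 * (Im w)\<^sup>2 \<ge> (Re z)\<^sup>2 * (Im w)\<^sup>2"
      by (metis mult_left_mono zero_le_power2)
    then have "(Re w)\<^sup>2 \<ge> (Re z)\<^sup>2" using y0 by simp
    then show False using re \<open>(Im w)\<^sup>2 \<le> (Im z)\<^sup>2\<close> by (simp add: power2_eq_square)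
  qed
  then show ?thesis unfolding w_def .
qed

lemma norm_sq_minus4: "cmod z ^ 2 - 4 \<le> cmod (z\<^sup>2 - 4)"
  using norm_triangle_ineq2[of "z\<^sup>2" 4] by (simp add: norm_power)

lemma Complex_sq4: "(Complex E t)\<^sup>2 - 4 = Complex (E\<^sup>2 - t\<^sup>2 - 4) (2*E*t)"
  by (simp add: complex_eq_iff power2_eq_square)

lemma mono_sq4:
  assumes "0 \<le> t" "t \<le> t'"
  shows "cmod ((Complex E t)\<^sup>2 - 4) \<le> cmod ((Complex E t')\<^sup>2 - 4)"
proof -
  have u: "t\<^sup>2 \<le> t'\<^sup>2" using assms by (intro power_mono) auto
  have "(E\<^sup>2 - t'\<^sup>2 - 4)\<^sup>2 + (2*E*t')\<^sup>2 - ((E\<^sup>2 - t\<^sup>2 - 4)\<^sup>2 + (2*E*t)\<^sup>2)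
        = (t'\<^sup>2 - t\<^sup>2) * (t'\<^sup>2 + t\<^sup>2 + 2*E\<^sup>2 + 8)"
    by (simp add: power2_eq_square algebra_simps)
  also have "\<dots> \<ge> 0" using u by (intro mult_nonneg_nonneg) auto
  finally show ?thesis unfolding Complex_sq4 complex_norm
    by (intro real_sqrt_le_mono) linarith
qed

lemma mono_Z:
  assumes "0 \<le> t" "t \<le> t'"
  shows "cmod (Complex E t) \<le> cmod (Complex E t')"
proof -
  have u: "t\<^sup>2 \<le> t'\<^sup>2" using assms by (intro power_mono) auto
  then show ?thesis unfolding complex_norm by (intro real_sqrt_le_mono) linarith
qed

lemma prod_ab:
  fixes s z w :: complex
  assumes "w\<^sup>2 = z\<^sup>2 - 4"
  shows "(s - (- z + w)/2) * (s + (z + w)/2) = s\<^sup>2 + s*z + 1"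
proof -
  have "(s - (- z + w)/2) * (s + (z + w)/2) = s\<^sup>2 + s*z + (z\<^sup>2 - w\<^sup>2)/4"
    by (simp add: field_simps power2_eq_square)
  then show ?thesis using assms by simp
qed


theorem lemma5p6:
  "\<exists>C::real. \<forall>(s::complex \<Rightarrow> complex) (E::real) (\<eta>0::real) (\<eta>1::real) (r::real \<Rightarrow> real).
     (continuous_on {z. 0 < Im z} s \<and> (\<forall>z. 0 < Im z \<longrightarrow> 0 < Im (s z)) \<and>
      0 < \<eta>0 \<and> max 3 \<eta>0 \<le> \<eta>1 \<and>
      continuous_on {\<eta>0..\<eta>1} r \<and>
      (\<forall>\<eta>\<in>{\<eta>0..\<eta>1}. 0 \<le> r \<eta> \<and> r \<eta> \<le> 1) \<and>
      (\<forall>x\<in>{\<eta>0..\<eta>1}. \<forall>y\<in>{\<eta>0..\<eta>1}. x \<le> y \<longrightarrow> r y \<le> r x) \<and>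
      (\<forall>\<eta>\<in>{\<eta>0..\<eta>1}.
         cmod ((s (Complex E \<eta>))\<^sup>2 + s (Complex E \<eta>) * Complex E \<eta> + 1)
           \<le> (1 + cmod (Complex E \<eta>)) * r \<eta>))
     \<longrightarrow> (\<forall>\<eta>\<in>{\<eta>0..\<eta>1}.
           cmod (s (Complex E \<eta>) - msc (Complex E \<eta>)) \<le> C * Fz (Complex E \<eta>) (r \<eta>))"
proof (rule exI[of _ 54], intro allI impI ballI)
  fix s :: "complex \<Rightarrow> complex" and E \<eta>0 \<eta>1 :: real and r :: "real \<Rightarrow> real" and \<eta> :: real
  assume H: "continuous_on {z. 0 < Im z} s \<and> (\<forall>z. 0 < Im z \<longrightarrow> 0 < Im (s z)) \<and>
      0 < \<eta>0 \<and> max 3 \<eta>0 \<le> \<eta>1 \<and>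
      continuous_on {\<eta>0..\<eta>1} r \<and>
      (\<forall>\<eta>\<in>{\<eta>0..\<eta>1}. 0 \<le> r \<eta> \<and> r \<eta> \<le> 1) \<and>
      (\<forall>x\<in>{\<eta>0..\<eta>1}. \<forall>y\<in>{\<eta>0..\<eta>1}. x \<le> y \<longrightarrow> r y \<le> r x) \<and>
      (\<forall>\<eta>\<in>{\<eta>0..\<eta>1}.
         cmod ((s (Complex E \<eta>))\<^sup>2 + s (Complex E \<eta>) * Complex E \<eta> + 1)
           \<le> (1 + cmod (Complex E \<eta>)) * r \<eta>)"
    and eta: "\<eta> \<in> {\<eta>0..\<eta>1}"
  have scont: "continuous_on {z. 0 < Im z} s" using H by blast
  have spos: "\<And>z. 0 < Im z \<Longrightarrow> 0 < Im (s z)" using H by blast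
  have e0: "0 < \<eta>0" and e1: "3 \<le> \<eta>1" "\<eta>0 \<le> \<eta>1" using H by auto
  have rb: "\<And>t. t \<in> {\<eta>0..\<eta>1} \<Longrightarrow> 0 \<le> r t \<and> r t \<le> 1" using H by blast
  have rmono: "\<And>x y. x \<in> {\<eta>0..\<eta>1} \<Longrightarrow> y \<in> {\<eta>0..\<eta>1} \<Longrightarrow> x \<le> y \<Longrightarrow> r y \<le> r x"
    using H by blast
  have Rb: "\<And>t. t \<in> {\<eta>0..\<eta>1} \<Longrightarrow> cmod ((s (Complex E t))\<^sup>2 + s (Complex E t) * Complex E t + 1)
           \<le> (1 + cmod (Complex E t)) * r t" using H by blast
  define Z where "Z = (\<lambda>t. Complex E t)"
  define W where "W = (\<lambda>t. csqrt (Z t - 2) * csqrt (Z t + 2))"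
  define a where "a = (\<lambda>t. s (Z t) - msc (Z t))"
  define b where "b = (\<lambda>t. s (Z t) + (Z t + W t)/2)"
  have key: "a t * b t = (s (Z t))\<^sup>2 + s (Z t) * Z t + 1 \<and> b t - a t = W t \<and> t < cmod (b t)
     \<and> 0 < cmod (W t) \<and> cmod (Z t) ^ 2 - 4 \<le> cmod (W t) ^ 2 \<and> 0 \<le> cmod (Z t)
     \<and> (\<forall>\<rho>. Fz (Z t) \<rho> = min ((1 + 1 / cmod (W t)) * \<rho>) (sqrt \<rho>))" if t0: "0 < t" for t
  proof -
    have ImZ: "Im (Z t) = t" unfolding Z_def by simp
    have sq: "(W t)\<^sup>2 = (Z t)\<^sup>2 - 4" unfolding W_def by (rule W_sq)
    have ImW: "t < Im (W t)" unfolding W_def using W_Im[of "Z t"] ImZ t0 by simp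
    have m: "msc (Z t) = (- Z t + W t)/2" unfolding msc_def W_def ..
    have p1: "a t * b t = (s (Z t))\<^sup>2 + s (Z t) * Z t + 1"
      unfolding a_def b_def m by (rule prod_ab[OF sq])
    have p2: "b t - a t = W t" unfolding a_def b_def m by (simp add: field_simps)
    have "Im (b t) = Im (s (Z t)) + (t + Im (W t))/2" unfolding b_def using ImZ by simp
    moreover have "0 < Im (s (Z t))" using spos ImZ t0 by simp
    ultimately have "t < Im (b t)" using ImW by (simp add: field_simps)
    then have p3: "t < cmod (b t)" using abs_Im_le_cmod[of "b t"] by linarith
    have p4: "0 < cmod (W t)" using ImW t0 by auto
    have nW: "cmod ((Z t)\<^sup>2 - 4) = cmod (W t) ^ 2" using sq by (metis norm_power)
    have p5: "cmod (Z t) ^ 2 - 4 \<le> cmod (W t) ^ 2" using norm_sq_minus4[of "Z t"] nW by simp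
    have p6: "\<forall>\<rho>. Fz (Z t) \<rho> = min ((1 + 1 / cmod (W t)) * \<rho>) (sqrt \<rho>)"
      unfolding Fz_def nW by simp
    show ?thesis using p1 p2 p3 p4 p5 p6 norm_ge_zero by blast
  qed
  have mono: "cmod (W t) \<le> cmod (W t') \<and> cmod (Z t) \<le> cmod (Z t')" if "0 < t" "t \<le> t'" for t t'
  proof -
    have sq: "\<And>u. (W u)\<^sup>2 = (Z u)\<^sup>2 - 4" unfolding W_def by (rule W_sq)
    have "cmod ((Z t)\<^sup>2 - 4) \<le> cmod ((Z t')\<^sup>2 - 4)" unfolding Z_def using that by (intro mono_sq4) auto
    then have "cmod (W t) ^ 2 \<le> cmod (W t') ^ 2" using sq by (metis norm_power)
    then have "cmod (W t) \<le> cmod (W t')" by (rule power2_le_imp_le) simp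
    moreover have "cmod (Z t) \<le> cmod (Z t')" unfolding Z_def using that by (intro mono_Z) auto
    ultimately show ?thesis by simp
  qed
  have Rb': "cmod (a t) * cmod (b t) \<le> (1 + cmod (Z t)) * r t" if "t \<in> {\<eta>0..\<eta>1}" for t
  proof -
    have "0 < t" using that e0 by simp
    then have "cmod (a t) * cmod (b t) = cmod ((s (Z t))\<^sup>2 + s (Z t) * Z t + 1)"
      using key[of t] by (metis norm_mult)
    then show ?thesis using Rb[OF that] unfolding Z_def by simp
  qed
  have tri: "cmod (W t) \<le> cmod (a t) + cmod (b t)" if "0 < t" for t
  proof -
    have "W t = b t - a t" using key[OF that] by simp
    then show ?thesis using norm_triangle_ineq4[of "b t" "a t"] by simp
  qed
  have tri2: "cmod (a t) \<le> cmod (b t) + cmod (W t)" if "0 < t" for t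
  proof -
    have "a t = b t - W t" using key[OF that] by (simp add: algebra_simps)
    then show ?thesis using norm_triangle_ineq4[of "b t" "W t"] by simp
  qed
  have top: "cmod (a \<eta>1) \<le> cmod (b \<eta>1)"
  proof (rule ccontr)
    assume nb: "\<not> cmod (a \<eta>1) \<le> cmod (b \<eta>1)"
    have p: "0 < \<eta>1" using e1 by simp
    have i1: "\<eta>1 \<in> {\<eta>0..\<eta>1}" using e1 by simp
    have "(1 + cmod (Z \<eta>1)) * r \<eta>1 \<le> (1 + cmod (Z \<eta>1)) * 1"
      using rb[OF i1] by (intro mult_left_mono) auto
    then have q4: "cmod (a \<eta>1) * cmod (b \<eta>1) \<le> 1 + cmod (Z \<eta>1)" using Rb'[OF i1] by (metis mult_1_right order_trans)
    have q1: "cmod (b \<eta>1) < cmod (a \<eta>1)" using nb by linarith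
    have q2: "\<eta>1 < cmod (b \<eta>1)" using key[OF p] by blast
    have q6: "(cmod (Z \<eta>1))\<^sup>2 - 4 \<le> (cmod (W \<eta>1))\<^sup>2" using key[OF p] by blast
    show False
      by (rule top_real[OF q1 q2 e1(1) q4 tri[OF p] q6 norm_ge_zero norm_ge_zero])
  qed
  have et: "0 < \<eta>" "\<eta>0 \<le> \<eta>" "\<eta> \<le> \<eta>1" using eta e0 by auto
  have goal: "cmod (a \<eta>) \<le> 54 * min ((1 + 1 / cmod (W \<eta>)) * r \<eta>) (sqrt (r \<eta>))"
  proof (cases "cmod (a \<eta>) \<le> cmod (b \<eta>)")
    case True
    have k1: "0 < cmod (W \<eta>)" "(cmod (Z \<eta>))\<^sup>2 - 4 \<le> (cmod (W \<eta>))\<^sup>2" using key[OF et(1)] by blast+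
    have "cmod (a \<eta>) \<le> 12 * min ((1 + 1 / cmod (W \<eta>)) * r \<eta>) (sqrt (r \<eta>))"
      by (rule good_real[OF norm_ge_zero True k1(1) tri[OF et(1)] Rb'[OF eta] k1(2) norm_ge_zero])
        (use rb[OF eta] in auto)
    moreover have "0 \<le> min ((1 + 1 / cmod (W \<eta>)) * r \<eta>) (sqrt (r \<eta>))" using rb[OF eta] by simp
    ultimately show ?thesis by linarith
  next
    case False
    define f where "f = (\<lambda>t. cmod (b t) - cmod (a t))"
    have cZ: "continuous_on {\<eta>..\<eta>1} Z" unfolding Z_def Complex_eq by (intro continuous_intros)
    have ImZ: "\<And>t. Im (Z t) = t" unfolding Z_def by simp
    have sZ: "continuous_on {\<eta>..\<eta>1} (\<lambda>t. s (Z t))"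
    proof -
      have "Z ` {\<eta>..\<eta>1} \<subseteq> {z. 0 < Im z}" using ImZ et by auto
      then show ?thesis using continuous_on_compose2[OF scont cZ] by blast
    qed
    have nonpos: "\<And>t c. 0 < t \<Longrightarrow> Im c = 0 \<Longrightarrow> Z t + c \<notin> \<real>\<^sub>\<le>\<^sub>0" 
      using ImZ by (auto simp: complex_nonpos_Reals_iff)
    have cs1: "continuous_on {\<eta>..\<eta>1} (\<lambda>t. csqrt (Z t + c))" if "Im c = 0" for c
    proof -
      have c1: "continuous_on {\<eta>..\<eta>1} (\<lambda>t. Z t + c)" using cZ by (intro continuous_intros)
      have "(\<lambda>t. Z t + c) ` {\<eta>..\<eta>1} \<subseteq> - \<real>\<^sub>\<le>\<^sub>0" using nonpos et that by auto
      then show ?thesis using continuous_on_compose2[OF continuous_on_csqrt c1] by blast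
    qed
    have cW: "continuous_on {\<eta>..\<eta>1} W"
      using cs1[of "-2"] cs1[of 2] unfolding diff_conv_add_uminus W_def by (auto intro!: continuous_intros)
    have cm: "continuous_on {\<eta>..\<eta>1} (\<lambda>t. msc (Z t))" 
    proof -
      have e: "(\<lambda>t. msc (Z t)) = (\<lambda>t. (- Z t + W t)/2)" unfolding msc_def W_def ..
      show ?thesis unfolding e using cZ cW by (intro continuous_intros) auto
    qed
    have cf: "continuous_on {\<eta>..\<eta>1} f" unfolding f_def a_def b_def
      using sZ cZ cW cm by (intro continuous_intros) auto
    have "f \<eta> \<le> 0" "0 \<le> f \<eta>1" using False top unfolding f_def by auto
    then obtain ts where ts: "\<eta> \<le> ts" "ts \<le> \<eta>1" "f ts = 0"
      using IVT'[of f \<eta> 0 \<eta>1, OF _ _ et(3) cf] by auto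
    have tsi: "ts \<in> {\<eta>0..\<eta>1}" using ts et by simp
    have tsp: "0 < ts" using ts et by simp
    have eq: "cmod (b ts) = cmod (a ts)" using ts(3) unfolding f_def by simp
    have "cmod (a ts) ^ 2 \<le> (1 + cmod (Z ts)) * r ts" using Rb'[OF tsi] eq by (simp add: power2_eq_square)
    moreover have "cmod (W ts) \<le> 2 * cmod (a ts)" using tri[OF tsp] eq by simp
    moreover have "r ts \<le> r \<eta>" using rmono[OF eta tsi ts(1)] .
    ultimately have g1: "(cmod (a ts))\<^sup>2 \<le> (1 + cmod (Z ts)) * r ts" and g2: "cmod (W ts) \<le> 2 * cmod (a ts)"
       and g3: "r ts \<le> r \<eta>" by auto
    have g4: "cmod (Z \<eta>) \<le> cmod (Z ts)" "cmod (W \<eta>) \<le> cmod (W ts)" using mono[OF et(1) ts(1)] by auto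
    have g5: "0 < cmod (W \<eta>)" using key[OF et(1)] by blast
    have g6: "(cmod (Z ts))\<^sup>2 - 4 \<le> (cmod (W ts))\<^sup>2" using key[OF tsp] by blast
    have g7: "cmod (b \<eta>) \<le> cmod (a \<eta>)" using False by linarith
    have g8: "0 \<le> r ts" "r \<eta> \<le> 1" using rb[OF tsi] rb[OF eta] by auto
    show ?thesis
      by (rule bad_real[OF norm_ge_zero norm_ge_zero g5 tri2[OF et(1)] Rb'[OF eta] g7 norm_ge_zero
          g4(1) g4(2) norm_ge_zero g1 g2 g6 g8(1) g3 g8(2)])
  qed
  have "Fz (Z \<eta>) (r \<eta>) = min ((1 + 1 / cmod (W \<eta>)) * r \<eta>) (sqrt (r \<eta>))"
    using key[OF et(1)] by blast
  then show "cmod (s (Complex E \<eta>) - msc (Complex E \<eta>)) \<le> 54 * Fz (Complex E \<eta>) (r \<eta>)"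
    using goal unfolding a_def Z_def by simp
qed


end
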